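(* Let $A\in\mathbb{R}^{n\times n}$, $C\in\mathbb{R}^{m\times n}$, and consider the system $x^+=Ax$, $y=Cx$ on $\mathcal{X}=\mathbb{R}^n$, $\mathcal{Y}=\mathbb{R}^m$. Let $S_0:=\mathcal{N}(C)$ and $S_k:=AS_{k-1}\cap S_0$ for $k\ge1$. Then for every $k\in\{0,1,2,\ldots\}$ and every $x\in\mathbb{R}^n$, $$[x]_k=\begin{cases} x+S_k & \text{if } x\in\mathcal{R}(A^k),\\ \emptyset & \text{if } x\notin\mathcal{R}(A^k),\end{cases}$$ where $\mathcal{R}(A^k)$ is the range of $A^k$.
   Context: For a system $x^+=f(x)$, $y=h(x)$ with $f:\mathcal{X}\to\mathcal{X}$, $h:\mathcal{X}\to\mathcal{Y}$, inverse images are taken in the set-valued sense: $f^{-1}(x):=\{\eta\in\mathcal{X}: f(\eta)=x\}$ (possibly empty), $h^{-1}(y):=\{\eta: h(\eta)=y\}$, and images of sets are $f(S)=\{f(s):s\in S\}$; for a set $S$ of points, $[S]_k:=\bigcup_{s\in S}[s]_k$. Define $[x]_0:=h^{-1}(h(x))$, and for $k\ge0$: $[x]_k^+:=f([f^{-1}(x)]_k)$ and $[x]_{k+1}:=[x]_k^+\cap[x]_0$. Here $f(x)=Ax$, $h(x)=Cx$. *)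

theory Defs
  imports "HOL-Analysis.Analysis"
begin

text \<open>Equivalence classes [x]_k for a system x+ = f x, y = h x (set-valued inverse images).\<close>
fun eqcls :: "('x \<Rightarrow> 'x) \<Rightarrow> ('x \<Rightarrow> 'y) \<Rightarrow> nat \<Rightarrow> 'x \<Rightarrow> 'x set" where
  "eqcls f h 0 x = {\<eta>. h \<eta> = h x}"
| "eqcls f h (Suc k) x =
     (f ` (\<Union>\<eta> \<in> {\<eta>. f \<eta> = x}. eqcls f h k \<eta>)) \<inter> eqcls f h 0 x"

fun matpow :: "('a::comm_ring_1)^'n^'n \<Rightarrow> nat \<Rightarrow> 'a^'n^'n" where
  "matpow A 0 = mat 1"
| "matpow A (Suc k) = A ** matpow A k"

fun Sseq :: "real^'n^'n \<Rightarrow> real^'n^'m \<Rightarrow> nat \<Rightarrow> (real^'n) set" where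
  "Sseq A C 0 = {x. C *v x = 0}"
| "Sseq A C (Suc k) = ((\<lambda>x. A *v x) ` Sseq A C k) \<inter> Sseq A C 0"

end

theory Submission
  imports Defs
begin

theorem mainTheorem2:
  fixes A :: "real^'n^'n" and C :: "real^'n^'m" and k :: nat and x :: "real^'n"
  shows "eqcls (\<lambda>v. A *v v) (\<lambda>v. C *v v) k x =
           (if x \<in> range (\<lambda>v. matpow A k *v v)
            then (\<lambda>s. x + s) ` Sseq A C k
            else {})"
proof (induction k arbitrary: x)
  case 0
  have "{\<eta>. C *v \<eta> = C *v x} = (\<lambda>s. x + s) ` {s. C *v s = 0}"
  proof (intro set_eqI iffI)
    fix e assume "e \<in> {\<eta>. C *v \<eta> = C *v x}"
    hence "C *v (e - x) = 0" by (simp add: matrix_vector_mult_diff_distrib)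
    thus "e \<in> (\<lambda>s. x + s) ` {s. C *v s = 0}" by (intro image_eqI[of _ _ "e - x"]) auto
  next
    fix e assume "e \<in> (\<lambda>s. x + s) ` {s. C *v s = 0}"
    thus "e \<in> {\<eta>. C *v \<eta> = C *v x}" by (auto simp: matrix_vector_right_distrib)
  qed
  moreover have "x \<in> range (\<lambda>v. matpow A 0 *v v)" by (simp add: image_iff)
  ultimately show ?case by simp
next
  case (Suc k)
  let ?U = "\<Union>\<eta> \<in> {\<eta>. A *v \<eta> = x}. eqcls (\<lambda>v. A *v v) (\<lambda>v. C *v v) k \<eta>"
  have E0: "eqcls (\<lambda>v. A *v v) (\<lambda>v. C *v v) 0 x = {\<eta>. C *v \<eta> = C *v x}" by simp
  have step: "eqcls (\<lambda>v. A *v v) (\<lambda>v. C *v v) (Suc k) x = (\<lambda>v. A *v v) ` ?U \<inter> {\<eta>. C *v \<eta> = C *v x}"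
    by simp
  show ?case
  proof (cases "x \<in> range (\<lambda>v. matpow A (Suc k) *v v)")
    case True
    then obtain v where v: "x = (A ** matpow A k) *v v" by auto
    define e0 where "e0 = matpow A k *v v"
    have e0R: "e0 \<in> range (\<lambda>v. matpow A k *v v)" unfolding e0_def by auto
    have Ae0: "A *v e0 = x" unfolding e0_def v by (simp add: matrix_vector_mul_assoc)
    have img: "(\<lambda>v. A *v v) ` ?U = (\<lambda>s. x + s) ` ((\<lambda>x. A *v x) ` Sseq A C k)"
    proof (intro set_eqI iffI)
      fix z assume "z \<in> (\<lambda>v. A *v v) ` ?U"
      then obtain e w where e: "A *v e = x" and w: "w \<in> eqcls (\<lambda>v. A *v v) (\<lambda>v. C *v v) k e" and z: "z = A *v w" by auto
      from w Suc.IH[of e] have "e \<in> range (\<lambda>v. matpow A k *v v)" and "w \<in> (\<lambda>s. e + s) ` Sseq A C k"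
        by (auto split: if_splits)
      then obtain s where s: "s \<in> Sseq A C k" "w = e + s" by auto
      have "z = x + A *v s" using z s e by (simp add: matrix_vector_right_distrib)
      thus "z \<in> (\<lambda>s. x + s) ` ((\<lambda>x. A *v x) ` Sseq A C k)" using s by auto
    next
      fix z assume "z \<in> (\<lambda>s. x + s) ` ((\<lambda>x. A *v x) ` Sseq A C k)"
      then obtain s where s: "s \<in> Sseq A C k" "z = x + A *v s" by auto
      have "e0 + s \<in> eqcls (\<lambda>v. A *v v) (\<lambda>v. C *v v) k e0" using Suc.IH[of e0] e0R s by auto
      hence "e0 + s \<in> ?U" using Ae0 by auto
      moreover have "z = A *v (e0 + s)" using s Ae0 by (simp add: matrix_vector_right_distrib)
      ultimately show "z \<in> (\<lambda>v. A *v v) ` ?U" by blast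
    qed
    have "(\<lambda>s. x + s) ` ((\<lambda>x. A *v x) ` Sseq A C k) \<inter> {\<eta>. C *v \<eta> = C *v x}
          = (\<lambda>s. x + s) ` Sseq A C (Suc k)"
      by (auto simp: matrix_vector_right_distrib)
    thus ?thesis using True step img by simp
  next
    case False
    have "?U = {}"
    proof -
      { fix e assume e: "A *v e = x" and eR: "e \<in> range (\<lambda>v. matpow A k *v v)"
        then obtain v where "e = matpow A k *v v" by auto
        hence "x = matpow A (Suc k) *v v" using e by (simp add: matrix_vector_mul_assoc)
        hence False using False by auto }
      thus ?thesis using Suc.IH by auto
    qed
    thus ?thesis using False step by simp
  qed
qed

end
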